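(* Let $r\ge3$, let $H=C_r$ be the cycle $1-2-\cdots-r-1$ and, for each $i\in\{1,\dots,r\}$, let $G_i$ be a $d_i$-regular graph of order $n_i$ with adjacency eigenvalues $d_i=\lambda_1(A(G_i)),\dots,\lambda_{n_i}(A(G_i))$. Let $G=\bigvee_{C_r}\{G_i:1\le i\le r\}$, $N_i=\sum_{j\in N_{C_r}(i)}n_j$, $\sigma(M_i(s))=\{s^2(d_i+N_i-1)-s\lambda_k(A(G_i))+1\}_{k=1}^{n_i}$ and $\lambda_1(M_i(s))=s^2(d_i+N_i-1)-sd_i+1$. Then $$\sigma(M_G(s))=\bigcup_{i=1}^r\big(\sigma(M_i(s))-\{\lambda_1(M_i(s))\}\big)\cup\sigma(F_r(s)),$$ where $F_r(s)$ is the $r\times r$ symmetric periodic Jacobi matrix with diagonal entries $\lambda_1(M_1(s)),\dots,\lambda_1(M_r(s))$, entries $(F_r(s))_{i,i+1}=(F_r(s))_{i+1,i}=-s\sqrt{n_in_{i+1}}$ for $i=1,\dots,r-1$, $(F_r(s))_{1,r}=(F_r(s))_{r,1}=-s\sqrt{n_1n_r}$, and all other entries $0$ (removing $\{\lambda_1(M_i(s))\}$ means removing one copy, corresponding to $k=1$).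
   Context: For a simple undirected graph $G$ with adjacency matrix $A$, degree matrix $D$ and identity $I$, and real $s$, the deformed Laplacian matrix is $M_G(s)=I-sA+s^2(D-I)$; $\sigma(\cdot)$ is the multiset of eigenvalues. $H$-join: given a graph $H$ on vertex set $\{1,\dots,r\}$ and pairwise vertex-disjoint graphs $G_1,\dots,G_r$, $\bigvee_H\{G_i\}$ has vertex set $\bigcup_iV(G_i)$ and edges $\bigcup_iE(G_i)$ together with all edges $uv$, $u\in V(G_i)$, $v\in V(G_j)$, for each $ij\in E(H)$. *)

theory Defs
  imports "Jordan_Normal_Form.Char_Poly" "HOL-Library.Multiset"
begin

definition simple_graph :: "nat \<Rightarrow> (nat \<Rightarrow> nat \<Rightarrow> bool) \<Rightarrow> bool" where
  "simple_graph n E \<longleftrightarrow> (\<forall>u v. E u v \<longrightarrow> u < n \<and> v < n \<and> E v u \<and> u \<noteq> v)"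

definition degree :: "nat \<Rightarrow> (nat \<Rightarrow> nat \<Rightarrow> bool) \<Rightarrow> nat \<Rightarrow> nat" where
  "degree n E v = card {w. w < n \<and> E v w}"

definition regular :: "nat \<Rightarrow> (nat \<Rightarrow> nat \<Rightarrow> bool) \<Rightarrow> nat \<Rightarrow> bool" where
  "regular n E d \<longleftrightarrow> (\<forall>v<n. degree n E v = d)"

definition adj_mat :: "nat \<Rightarrow> (nat \<Rightarrow> nat \<Rightarrow> bool) \<Rightarrow> real mat" where
  "adj_mat n E = mat n n (\<lambda>(u,v). if E u v then 1 else 0)"

definition deg_mat :: "nat \<Rightarrow> (nat \<Rightarrow> nat \<Rightarrow> bool) \<Rightarrow> real mat" where
  "deg_mat n E = mat n n (\<lambda>(u,v). if u = v then real (degree n E u) else 0)"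

definition deformed_lap :: "nat \<Rightarrow> (nat \<Rightarrow> nat \<Rightarrow> bool) \<Rightarrow> real \<Rightarrow> real mat" where
  "deformed_lap n E s = 1\<^sub>m n - s \<cdot>\<^sub>m adj_mat n E + (s^2) \<cdot>\<^sub>m (deg_mat n E - 1\<^sub>m n)"

definition spec :: "real mat \<Rightarrow> real multiset" where
  "spec A = (THE m. char_poly A = (\<Prod>a\<in>#m. [:- a, 1:]))"

text \<open>H-join.  H is a graph on {0..<r}; G_i has vertex set {0..<nn i} and edges EE i.
  Vertex u of G_i is the global vertex (offset i + u).\<close>
definition offset :: "(nat \<Rightarrow> nat) \<Rightarrow> nat \<Rightarrow> nat" where
  "offset nn i = (\<Sum>j<i. nn j)"

definition hjoin_E :: "nat \<Rightarrow> (nat \<Rightarrow> nat \<Rightarrow> bool) \<Rightarrow> (nat \<Rightarrow> nat) \<Rightarrow>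
    (nat \<Rightarrow> nat \<Rightarrow> nat \<Rightarrow> bool) \<Rightarrow> nat \<Rightarrow> nat \<Rightarrow> bool" where
  "hjoin_E r H nn EE p q \<longleftrightarrow> (\<exists>i<r. \<exists>j<r. \<exists>u<nn i. \<exists>v<nn j.
      p = offset nn i + u \<and> q = offset nn j + v \<and> ((i = j \<and> EE i u v) \<or> H i j))"

definition hjoin_order :: "nat \<Rightarrow> (nat \<Rightarrow> nat) \<Rightarrow> nat" where
  "hjoin_order r nn = offset nn r"

text \<open>The cycle C_r on {0..<r} (vertices 1..r of the paper shifted by one).\<close>
definition cycle_adj :: "nat \<Rightarrow> nat \<Rightarrow> nat \<Rightarrow> bool" where
  "cycle_adj r i j \<longleftrightarrow> i < r \<and> j < r \<and> (j = (i + 1) mod r \<or> i = (j + 1) mod r)"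

definition cycN :: "nat \<Rightarrow> (nat \<Rightarrow> nat) \<Rightarrow> nat \<Rightarrow> nat" where
  "cycN r n i = (\<Sum>j\<in>{j. j < r \<and> cycle_adj r i j}. n j)"

definition lam1M :: "nat \<Rightarrow> (nat \<Rightarrow> nat) \<Rightarrow> (nat \<Rightarrow> nat) \<Rightarrow> real \<Rightarrow> nat \<Rightarrow> real" where
  "lam1M r n d s i = s^2 * (real (d i) + real (cycN r n i) - 1) - s * real (d i) + 1"

text \<open>The periodic Jacobi matrix F_r(s) (indices 0..r-1 for the paper's 1..r).\<close>
definition F_mat :: "nat \<Rightarrow> (nat \<Rightarrow> nat) \<Rightarrow> (nat \<Rightarrow> nat) \<Rightarrow> real \<Rightarrow> real mat" where
  "F_mat r n d s = mat r r (\<lambda>(i,j). if i = j then lam1M r n d s i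
     else if j = i + 1 \<or> i = j + 1 \<or> (i = 0 \<and> j = r - 1) \<or> (i = r - 1 \<and> j = 0)
          then - s * sqrt (real (n i) * real (n j)) else 0)"

end

theory Submission
  imports Defs
begin


lemma poly_prod_lin: "poly (\<Prod>a\<in>#m. [:- a, 1:]) x = (\<Prod>a\<in>#m. (x - (a::'a::idom)))"
  by (induction m) (auto simp: algebra_simps)

lemma poly_prod_lin_f: "poly (\<Prod>a\<in>#m. [:- f a, 1:]) x = (\<Prod>a\<in>#m. (x - (f a::'a::idom)))"
  by (induction m) (auto simp: algebra_simps)

lemma poly_prod_list_lin: "poly (\<Prod>a\<leftarrow>bs. [:- a, 1:]) x = (\<Prod>a\<leftarrow>bs. (x - (a::'a::idom)))"
  by (induction bs) (auto simp: algebra_simps)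

lemma prod_lin_inj:
  fixes m1 m2 :: "real multiset"
  assumes "(\<Prod>a\<in>#m1. [:- a, 1:]) = (\<Prod>a\<in>#m2. [:- a, 1:])"
  shows "m1 = m2"
  using assms
proof (induction m1 arbitrary: m2)
  case empty
  show ?case
  proof (rule ccontr)
    assume "{#} \<noteq> m2"
    then obtain a where a: "a \<in># m2" by (metis multiset_nonemptyE)
    have "poly (\<Prod>a\<in>#m2. [:- a, 1:]) a = 0"
      unfolding poly_prod_lin prod_mset_zero_iff using a by auto
    with empty show False by simp
  qed
next
  case (add a m1)
  have "poly (\<Prod>a\<in>#add_mset a m1. [:- a, 1:]) a = 0" by simp
  hence "poly (\<Prod>a\<in>#m2. [:- a, 1:]) a = 0" unfolding add.prems .
  hence "a \<in># m2" unfolding poly_prod_lin prod_mset_zero_iff by auto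
  hence m2: "m2 = add_mset a (m2 - {#a#})" by simp
  have "[:- a, 1:] * (\<Prod>a\<in>#m1. [:- a, 1:]) = [:- a, 1:] * (\<Prod>a\<in>#(m2 - {#a#}). [:- a, 1:])"
    using add.prems by (subst (asm) m2) simp
  hence "(\<Prod>a\<in>#m1. [:- a, 1:]) = (\<Prod>a\<in>#(m2 - {#a#}). [:- a, 1:])"
    by (subst (asm) mult_left_cancel) auto
  from add.IH[OF this] show ?case using m2 by simp
qed

lemma spec_eqI:
  assumes "char_poly A = (\<Prod>a\<in>#m. [:- a, 1:])"
  shows "spec A = m"
  unfolding spec_def
  by (rule the_equality, rule assms, insert assms prod_lin_inj, metis)

lemma symmetric_char_poly_splits:
  fixes A :: "real mat"
  assumes A: "A \<in> carrier_mat n n" and sym: "\<And>i j. i < n \<Longrightarrow> j < n \<Longrightarrow> A $$ (i,j) = A $$ (j,i)"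
  shows "\<exists>m. char_poly A = (\<Prod>a\<in>#m. [:- a, 1:])"
proof -
  let ?B = "map_mat complex_of_real A"
  have B: "?B \<in> carrier_mat n n" using A by auto
  have cB: "char_poly ?B = map_poly of_real (char_poly A)"
    by (rule of_real_hom.char_poly_hom[OF A])
  obtain as where as: "char_poly ?B = (\<Prod>a\<leftarrow>as. [:- a, 1:])"
    using char_poly_factorized[OF B] by blast
  have real: "a = of_real (Re a)" if a: "a \<in> set as" for a
  proof -
    have "poly (char_poly ?B) a = 0" unfolding as using a
      by (induction as) auto
    hence "eigenvalue ?B a" using eigenvalue_root_char_poly[OF B] by simp
    then obtain v where ev: "eigenvector ?B v a" unfolding eigenvalue_def by blast
    hence v: "v \<in> carrier_vec n" "v \<noteq> 0\<^sub>v n" "?B *\<^sub>v v = a \<cdot>\<^sub>v v"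
      unfolding eigenvector_def using B by auto
    have Bv: "(\<Sum>j<n. ?B $$ (i,j) * v $ j) = a * v $ i" if "i < n" for i
    proof -
      have "(?B *\<^sub>v v) $ i = a * v $ i" using v(3) that v(1) by simp
      moreover have "(?B *\<^sub>v v) $ i = (\<Sum>j<n. ?B $$ (i,j) * v $ j)"
        using that B v(1) by (auto simp: scalar_prod_def lessThan_atLeast0 intro!: sum.cong)
      ultimately show ?thesis by simp
    qed
    define S where "S = (\<Sum>i<n. cnj (v $ i) * (\<Sum>j<n. ?B $$ (i,j) * v $ j))"
    define K where "K = (\<Sum>i<n. (cmod (v $ i))^2)"
    have cn: "cnj z * z = of_real ((cmod z)^2)" for z
      using complex_norm_square[of z] by (simp add: mult.commute)
    have S1: "S = a * of_real K"
      unfolding S_def K_def using Bv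
      by (auto simp: of_real_sum sum_distrib_left cn intro!: sum.cong)
    have "cnj S = (\<Sum>i<n. \<Sum>j<n. v $ i * (?B $$ (i,j)) * cnj (v $ j))"
      unfolding S_def using A by (auto simp: sum_distrib_left intro!: sum.cong)
    also have "\<dots> = (\<Sum>j<n. \<Sum>i<n. v $ i * (?B $$ (i,j)) * cnj (v $ j))"
      by (rule sum.swap)
    also have "\<dots> = S"
      unfolding S_def using A sym by (auto simp: sum_distrib_left intro!: sum.cong)
    finally have S2: "cnj S = S" .
    have "K > 0"
    proof -
      from v(1,2) obtain i where i: "i < n" "v $ i \<noteq> 0" by (metis eq_vecI carrier_vecD index_zero_vec)
      have "K \<ge> (cmod (v $ i))^2" unfolding K_def
        by (rule member_le_sum) (use i in auto)
      moreover have "(cmod (v $ i))^2 > 0" using i by simp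
      ultimately show ?thesis by linarith
    qed
    from S1 S2 have "cnj a * of_real K = a * of_real K" by simp
    hence "cnj a = a" using \<open>K > 0\<close> by simp
    thus ?thesis by (metis Reals_cnj_iff complex_is_Real_iff of_real_Re)
  qed
  define bs where "bs = map Re as"
  have "poly (char_poly A) x = (\<Prod>b\<leftarrow>bs. x - b)" for x
  proof -
    have "complex_of_real (poly (char_poly A) x) = poly (char_poly ?B) (of_real x)"
      unfolding cB of_real_hom.poly_map_poly ..
    also have "\<dots> = (\<Prod>a\<leftarrow>as. of_real x - a)" unfolding as
      by (induction as) (auto simp: algebra_simps)
    also have "\<dots> = (\<Prod>a\<leftarrow>as. of_real (x - Re a))"
    proof (intro arg_cong[of _ _ prod_list] map_cong refl)
      fix a assume "a \<in> set as"
      hence "a = of_real (Re a)" by (rule real)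
      thus "complex_of_real x - a = complex_of_real (x - Re a)" by (metis of_real_diff)
    qed
    also have "\<dots> = of_real (\<Prod>b\<leftarrow>bs. x - b)" unfolding bs_def
      by (induction as) auto
    finally show ?thesis by (simp only: of_real_eq_iff)
  qed
  hence "char_poly A = (\<Prod>a\<in>#mset bs. [:- a, 1:])"
    by (intro poly_ext) (simp add: poly_prod_lin prod_mset_prod_list poly_prod_list_lin flip: mset_map)
  thus ?thesis by blast
qed

lemma spec_char_poly:
  fixes A :: "real mat"
  assumes A: "A \<in> carrier_mat n n" and sym: "\<And>i j. i < n \<Longrightarrow> j < n \<Longrightarrow> A $$ (i,j) = A $$ (j,i)"
  shows "char_poly A = (\<Prod>a\<in>#spec A. [:- a, 1:])"
proof -
  obtain m where m: "char_poly A = (\<Prod>a\<in>#m. [:- a, 1:])"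
    using symmetric_char_poly_splits[OF A sym] by blast
  show ?thesis using spec_eqI[OF m] m by simp
qed

lemma poly_char_poly_det:
  fixes A :: "'a :: field mat"
  assumes A: "A \<in> carrier_mat n n"
  shows "poly (char_poly A) x = det (x \<cdot>\<^sub>m 1\<^sub>m n - A)"
proof -
  have "- char_matrix A x = x \<cdot>\<^sub>m 1\<^sub>m n - A"
    by (rule eq_matI) (use A in \<open>auto simp: char_matrix_def\<close>)
  thus ?thesis using char_poly_matrix[OF A] by simp
qed

lemma degree_prod_lin: "Polynomial.degree (\<Prod>a\<in>#m. [:- a, 1:]) = size (m :: 'a::idom multiset)"
proof (induction m)
  case (add x m)
  have "(\<Prod>a\<in>#m. [:- a, 1:]) \<noteq> 0" by (auto simp: prod_mset_zero_iff)
  thus ?case unfolding image_mset_add_mset prod_mset.add_mset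
    by (subst degree_mult_eq) (auto simp: add.IH)
qed simp

lemma prod_mset_scale: "c ^ size m * (\<Prod>a\<in>#m. f a) = (\<Prod>a\<in>#m. c * f a :: 'a::comm_monoid_mult)"
  by (induction m) (auto simp: ac_simps)

lemma cp_affine:
  fixes A :: "real mat"
  assumes A: "A \<in> carrier_mat n n" and cp: "char_poly A = (\<Prod>a\<in>#m. [:- a, 1:])"
  shows "char_poly (\<alpha> \<cdot>\<^sub>m 1\<^sub>m n - s \<cdot>\<^sub>m A) = (\<Prod>a\<in>#m. [:- (\<alpha> - s * a), 1:])"
proof -
  have sz: "size m = n" using degree_monic_char_poly[OF A] unfolding cp degree_prod_lin by simp
  have C: "\<alpha> \<cdot>\<^sub>m 1\<^sub>m n - s \<cdot>\<^sub>m A \<in> carrier_mat n n" using A by auto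
  show ?thesis
  proof (rule poly_ext)
    fix x
    have "poly (char_poly (\<alpha> \<cdot>\<^sub>m 1\<^sub>m n - s \<cdot>\<^sub>m A)) x = det (x \<cdot>\<^sub>m 1\<^sub>m n - (\<alpha> \<cdot>\<^sub>m 1\<^sub>m n - s \<cdot>\<^sub>m A))"
      by (rule poly_char_poly_det[OF C])
    also have "\<dots> = (\<Prod>a\<in>#m. x - (\<alpha> - s * a))"
    proof (cases "s = 0")
      case True
      have "x \<cdot>\<^sub>m 1\<^sub>m n - (\<alpha> \<cdot>\<^sub>m 1\<^sub>m n - s \<cdot>\<^sub>m A) = (x - \<alpha>) \<cdot>\<^sub>m 1\<^sub>m n"
        by (rule eq_matI) (use A True in auto)
      hence "det (x \<cdot>\<^sub>m 1\<^sub>m n - (\<alpha> \<cdot>\<^sub>m 1\<^sub>m n - s \<cdot>\<^sub>m A)) = (x - \<alpha>) ^ n"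
        by (simp add: det_smult det_one)
      also have "\<dots> = (\<Prod>a\<in>#m. x - (\<alpha> - s * a))"
        using True sz by (simp add: prod_mset_constant)
      finally show ?thesis .
    next
      case False
      define y where "y = (\<alpha> - x) / s"
      have "x \<cdot>\<^sub>m 1\<^sub>m n - (\<alpha> \<cdot>\<^sub>m 1\<^sub>m n - s \<cdot>\<^sub>m A) = (- s) \<cdot>\<^sub>m (y \<cdot>\<^sub>m 1\<^sub>m n - A)"
        by (rule eq_matI) (use A False in \<open>auto simp: y_def field_simps\<close>)
      hence "det (x \<cdot>\<^sub>m 1\<^sub>m n - (\<alpha> \<cdot>\<^sub>m 1\<^sub>m n - s \<cdot>\<^sub>m A)) = (- s) ^ n * det (y \<cdot>\<^sub>m 1\<^sub>m n - A)"
        using A by (simp add: det_smult)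
      also have "det (y \<cdot>\<^sub>m 1\<^sub>m n - A) = poly (char_poly A) y"
        by (rule poly_char_poly_det[OF A, symmetric])
      also have "\<dots> = (\<Prod>a\<in>#m. y - a)" unfolding cp poly_prod_lin ..
      also have "(- s) ^ n * \<dots> = (\<Prod>a\<in>#m. (- s) * (y - a))"
        unfolding sz[symmetric] by (rule prod_mset_scale)
      also have "\<dots> = (\<Prod>a\<in>#m. x - (\<alpha> - s * a))"
        by (rule arg_cong[of _ _ prod_mset], rule image_mset_cong) (use False in \<open>auto simp: y_def field_simps\<close>)
      finally show ?thesis .
    qed
    also have "\<dots> = poly (\<Prod>a\<in>#m. [:- (\<alpha> - s * a), 1:]) x"
      unfolding poly_prod_lin_f ..
    finally show "poly (char_poly (\<alpha> \<cdot>\<^sub>m 1\<^sub>m n - s \<cdot>\<^sub>m A)) x = poly (\<Prod>a\<in>#m. [:- (\<alpha> - s * a), 1:]) x" .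
  qed
qed



lemma offset_0[simp]: "offset sz 0 = 0" by (simp add: offset_def)
lemma offset_Suc: "offset sz (Suc i) = offset sz i + sz i" by (simp add: offset_def)
lemma offset_mono: "i \<le> j \<Longrightarrow> offset sz i \<le> offset sz j"
  unfolding offset_def by (rule sum_mono2) auto
lemma offset_mono_Suc: "i < j \<Longrightarrow> offset sz (Suc i) \<le> offset sz j"
  by (rule offset_mono) simp

definition bidx :: "(nat \<Rightarrow> nat) \<Rightarrow> nat \<Rightarrow> nat" where
  "bidx sz p = (LEAST i. p < offset sz (Suc i))"

lemma bidx_props:
  assumes "p < offset sz r"
  shows "bidx sz p < r" "offset sz (bidx sz p) \<le> p" "p < offset sz (bidx sz p) + sz (bidx sz p)"
proof -
  have r0: "r > 0" using assms by (cases r) auto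
  have ex: "p < offset sz (Suc (r - 1))" using assms r0 by simp
  have l: "p < offset sz (Suc (bidx sz p))" unfolding bidx_def by (rule LeastI[of "\<lambda>i. p < offset sz (Suc i)", OF ex])
  have le: "bidx sz p \<le> r - 1" unfolding bidx_def by (rule Least_le[of "\<lambda>i. p < offset sz (Suc i)", OF ex])
  thus "bidx sz p < r" using r0 by simp
  show "p < offset sz (bidx sz p) + sz (bidx sz p)" using l by (simp add: offset_Suc)
  show "offset sz (bidx sz p) \<le> p"
  proof (cases "bidx sz p")
    case (Suc c)
    have "\<not> p < offset sz (Suc c)"
      by (rule not_less_Least) (use Suc in \<open>simp add: bidx_def\<close>)
    thus ?thesis using Suc by (simp add: offset_Suc)
  qed simp
qed

lemma bidx_eq:
  assumes "u < sz i"
  shows "bidx sz (offset sz i + u) = i"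
  unfolding bidx_def
proof (rule Least_equality)
  show "offset sz i + u < offset sz (Suc i)" using assms by (simp add: offset_Suc)
  fix j assume "offset sz i + u < offset sz (Suc j)"
  thus "i \<le> j" using offset_mono_Suc[of j i sz] by (cases "j < i") auto
qed

lemma block_decomp:
  assumes "p < offset sz r"
  obtains i u where "i < r" "u < sz i" "p = offset sz i + u" "bidx sz p = i"
  using bidx_props[OF assms] by (metis add_diff_inverse_nat add_less_cancel_left not_less)

lemma offset_lt:
  assumes "i < r" "u < sz i"
  shows "offset sz i + u < offset sz r"
proof -
  have "offset sz i + u < offset sz (Suc i)" using assms by (simp add: offset_Suc)
  also have "\<dots> \<le> offset sz r" using assms by (intro offset_mono) simp
  finally show ?thesis .
qed

lemma offset_inj:
  assumes "u < sz i" "v < sz j" "offset sz i + u = offset sz j + v"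
  shows "i = j \<and> u = v"
proof -
  have "i = j" using bidx_eq[of u sz i] bidx_eq[of v sz j] assms by simp
  thus ?thesis using assms by simp
qed

lemma sum_split_add: "(\<Sum>k<a + b. f k) = (\<Sum>k<a. f k) + (\<Sum>t<b. f (a + t :: nat))"
  by (induction b) (auto simp: add.assoc[symmetric])

lemma sum_blocks:
  "(\<Sum>p<offset sz r. f p) = (\<Sum>j<r. \<Sum>u<sz j. f (offset sz j + u))"
proof (induction r)
  case (Suc r)
  have "(\<Sum>p<offset sz (Suc r). f p) = (\<Sum>p<offset sz r. f p) + (\<Sum>u<sz r. f (offset sz r + u))"
    unfolding offset_Suc by (rule sum_split_add)
  thus ?case using Suc by simp
qed simp

definition m1 :: "(nat \<Rightarrow> nat) \<Rightarrow> nat \<Rightarrow> nat" where "m1 n i = n i - 1"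

definition gmap :: "(nat \<Rightarrow> nat) \<Rightarrow> nat \<Rightarrow> nat" where
  "gmap n t = offset n (bidx (m1 n) t) + (t - offset (m1 n) (bidx (m1 n) t)) + 1"

definition hmap :: "(nat \<Rightarrow> nat) \<Rightarrow> nat \<Rightarrow> nat" where
  "hmap n p = offset (m1 n) (bidx n p) + (p - offset n (bidx n p)) - 1"

lemma N_eq: "(\<forall>i<r. 1 \<le> n i) \<Longrightarrow> offset n r = r + offset (m1 n) r"
  by (induction r) (auto simp: offset_Suc m1_def)

lemma gmap_block:
  assumes "u < n i - 1"
  shows "gmap n (offset (m1 n) i + u) = offset n i + (u + 1)"
proof -
  have "bidx (m1 n) (offset (m1 n) i + u) = i" using assms by (intro bidx_eq) (simp add: m1_def)
  thus ?thesis unfolding gmap_def by simp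
qed

lemma gmap_props:
  assumes "t < offset (m1 n) r"
  shows "gmap n t < offset n r" "bidx n (gmap n t) = bidx (m1 n) t"
    "gmap n t \<noteq> offset n (bidx n (gmap n t))" "hmap n (gmap n t) = t"
proof -
  obtain i u where iu: "i < r" "u < m1 n i" "t = offset (m1 n) i + u" "bidx (m1 n) t = i"
    using block_decomp[OF assms] by blast
  have u: "u + 1 < n i" using iu(2) by (simp add: m1_def)
  have g: "gmap n t = offset n i + (u + 1)" using iu gmap_block[of u n i] by (simp add: m1_def)
  have b: "bidx n (gmap n t) = i" unfolding g by (rule bidx_eq[of "u+1" n i, OF u])
  show "gmap n t < offset n r" unfolding g by (rule offset_lt[of i r "u+1" n, OF iu(1) u])
  show "bidx n (gmap n t) = bidx (m1 n) t" using b iu by simp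
  show "gmap n t \<noteq> offset n (bidx n (gmap n t))" using b g by simp
  show "hmap n (gmap n t) = t" unfolding hmap_def b using g iu by simp
qed

lemma hmap_props:
  assumes "p < offset n r" "p \<noteq> offset n (bidx n p)"
  shows "hmap n p < offset (m1 n) r" "gmap n (hmap n p) = p"
proof -
  obtain i u where iu: "i < r" "u < n i" "p = offset n i + u" "bidx n p = i"
    using block_decomp[OF assms(1)] by blast
  have u0: "u \<ge> 1" using assms(2) iu by simp
  have h: "hmap n p = offset (m1 n) i + (u - 1)" unfolding hmap_def using iu u0 by simp
  have u': "u - 1 < m1 n i" using iu u0 by (simp add: m1_def)
  show "hmap n p < offset (m1 n) r" unfolding h by (rule offset_lt[of i r "u - 1" "m1 n", OF iu(1) u'])
  show "gmap n (hmap n p) = p" unfolding h using gmap_block[of "u - 1" n i] u' iu u0 by (simp add: m1_def)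
qed



lemma bidx_first: "0 < sz i \<Longrightarrow> bidx sz (offset sz i) = i"
  using bidx_eq[of 0 sz i] by simp

lemma first_lt: "i < r \<Longrightarrow> 0 < sz i \<Longrightarrow> offset sz i < offset sz r"
  using offset_lt[of i r 0 sz] by simp

lemma gmap_not_first:
  assumes "t < offset (m1 n) r" "i < r" "0 < n i"
  shows "gmap n t \<noteq> offset n i"
proof
  assume eq: "gmap n t = offset n i"
  hence "bidx n (gmap n t) = i" using bidx_first[of n i, OF assms(3)] by simp
  with gmap_props(3)[OF assms(1)] eq show False by simp
qed

lemma gmap_inj:
  assumes "t < offset (m1 n) r" "t' < offset (m1 n) r" "gmap n t = gmap n t'"
  shows "t = t'"
  using gmap_props(4)[OF assms(1)] gmap_props(4)[OF assms(2)] assms(3) by metis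

lemma mult_entry:
  assumes "A \<in> carrier_mat a b" "B \<in> carrier_mat b c" "i < a" "j < c"
  shows "(A * B) $$ (i,j) = (\<Sum>k<b. A $$ (i,k) * B $$ (k,j))"
  using assms by (auto simp: scalar_prod_def lessThan_atLeast0 intro!: sum.cong)

definition Zmat :: "nat \<Rightarrow> (nat \<Rightarrow> nat) \<Rightarrow> real mat \<Rightarrow> real mat" where
  "Zmat r n M = mat (offset (m1 n) r) (offset (m1 n) r)
     (\<lambda>(a,b). M $$ (gmap n a, gmap n b) - M $$ (offset n (bidx n (gmap n a)), gmap n b))"

lemma sum_delta_left: "a < (N::nat) \<Longrightarrow> (\<Sum>k<N. (if k = a then c else 0) * f k) = c * (f a :: real)"
proof -
  assume a: "a < N"
  have "(\<Sum>k<N. (if k = a then c else 0) * f k) = (\<Sum>k<N. if k = a then c * f k else 0)"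
    by (rule sum.cong) auto
  also have "\<dots> = c * f a" using a by (subst sum.delta) auto
  finally show ?thesis .
qed

lemma sum_delta_right: "a < (N::nat) \<Longrightarrow> (\<Sum>k<N. f k * (if k = a then c else 0)) = f a * (c :: real)"
  using sum_delta_left[of a N c f] by (simp add: mult.commute cong: if_cong)

lemma sum_delta2:
  assumes "a < (N::nat)" "b < N" "a \<noteq> b"
  shows "(\<Sum>k<N. (if k = a then 1 else if k = b then -1 else 0) * f k) = f a - (f b :: real)"
proof -
  have "(\<Sum>k<N. (if k = a then 1 else if k = b then -1 else 0) * f k)
     = (\<Sum>k<N. (if k = a then 1 else 0) * f k) + (\<Sum>k<N. (if k = b then -1 else 0) * f k)"
    unfolding sum.distrib[symmetric] by (rule sum.cong) (use assms in auto)
  also have "\<dots> = f a - f b" using assms by (simp add: sum_delta_left)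
  finally show ?thesis .
qed

lemma reduction:
  fixes M F :: "real mat"
  assumes n1: "\<forall>i<r. 1 \<le> n i"
    and M: "M \<in> carrier_mat (offset n r) (offset n r)" and F: "F \<in> carrier_mat r r"
    and rows: "\<And>p q. p < offset n r \<Longrightarrow> q < r \<Longrightarrow>
       (\<Sum>u<n q. M $$ (p, offset n q + u)) = F $$ (bidx n p, q) * sqrt (n q) / sqrt (n (bidx n p))"
  shows "det (x \<cdot>\<^sub>m 1\<^sub>m (offset n r) - M) = det (x \<cdot>\<^sub>m 1\<^sub>m r - F) * det (x \<cdot>\<^sub>m 1\<^sub>m (offset (m1 n) r) - Zmat r n M)"
proof -
  define N where "N = offset n r"
  define K where "K = offset (m1 n) r"
  have NK: "N = r + K" unfolding N_def K_def by (rule N_eq[OF n1])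
  have npos: "0 < n i" if "i < r" for i using n1 that by force
  have sqpos: "sqrt (real (n i)) > 0" if "i < r" for i using npos[OF that] by simp
  define P where "P = mat N N (\<lambda>(p,c). if c < r then (if bidx n p = c then 1 / sqrt (n c) else 0)
       else (if p = gmap n (c - r) then 1 else 0))"
  define P' where "P' = mat N N (\<lambda>(c,p). if c < r then (if p = offset n c then sqrt (n c) else 0)
       else (if p = gmap n (c - r) then 1 else if p = offset n (bidx n (gmap n (c - r))) then -1 else 0))"
  define Y where "Y = mat r K (\<lambda>(i,t). sqrt (n i) * M $$ (offset n i, gmap n t))"
  define Z where "Z = Zmat r n M"
  define T where "T = four_block_mat F Y (0\<^sub>m K r) Z"
  have Zc: "Z \<in> carrier_mat K K" unfolding Z_def Zmat_def K_def by simp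
  have Yc: "Y \<in> carrier_mat r K" unfolding Y_def by simp
  have Pc: "P \<in> carrier_mat N N" unfolding P_def by simp
  have P'c: "P' \<in> carrier_mat N N" unfolding P'_def by simp
  have Tc: "T \<in> carrier_mat N N" unfolding T_def NK using F Yc Zc by auto
  have Mc: "M \<in> carrier_mat N N" using M unfolding N_def .
  have Tent: "T $$ (k,c) = (if k < r then (if c < r then F $$ (k,c) else Y $$ (k, c - r))
                 else (if c < r then 0 else Z $$ (k - r, c - r)))" if "k < N" "c < N" for k c
    unfolding T_def using that F Yc Zc NK by (subst index_mat_four_block) auto
  have gfacts: "gmap n t < N" "bidx n (gmap n t) < r" "gmap n t \<noteq> offset n (bidx n (gmap n t))"
     "hmap n (gmap n t) = t" if "t < K" for t
    using gmap_props[of t n r] that bidx_props(1)[of "gmap n t" n r] unfolding K_def N_def by auto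
  have PP: "P' * P = 1\<^sub>m N"
  proof (rule eq_matI)
    fix i j assume i: "i < dim_row (1\<^sub>m N)" and j: "j < dim_col (1\<^sub>m N)"
    hence i: "i < N" and j: "j < N" by auto
    have e: "(P' * P) $$ (i,j) = (\<Sum>k<N. P' $$ (i,k) * P $$ (k,j))"
      by (rule mult_entry[OF P'c Pc i j])
    show "(P' * P) $$ (i,j) = 1\<^sub>m N $$ (i,j)"
    proof (cases "i < r")
      case True
      have fi: "offset n i < N" unfolding N_def using first_lt[of i r n, OF True npos[OF True]] .
      have "(P' * P) $$ (i,j) = (\<Sum>k<N. (if k = offset n i then sqrt (n i) else 0) * P $$ (k,j))"
        unfolding e by (rule sum.cong) (use True i in \<open>auto simp: P'_def\<close>)
      also have "\<dots> = sqrt (n i) * P $$ (offset n i, j)" by (rule sum_delta_left[OF fi])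
      also have "\<dots> = 1\<^sub>m N $$ (i,j)"
      proof (cases "j < r")
        case True
        thus ?thesis using fi j i sqpos[OF \<open>i < r\<close>] bidx_first[of n i, OF npos[OF \<open>i < r\<close>]]
          by (auto simp: P_def)
      next
        case False
        have "j - r < K" using j False NK by simp
        from gmap_not_first[of "j - r" n r i, OF this[unfolded K_def] \<open>i < r\<close> npos[OF \<open>i < r\<close>]]
        show ?thesis using fi j i False True by (auto simp: P_def)
      qed
      finally show ?thesis .
    next
      case False
      define t where "t = i - r"
      have t: "t < K" using i False NK unfolding t_def by simp
      define a where "a = gmap n t"
      define f where "f = offset n (bidx n a)"
      have a: "a < N" "bidx n a < r" "a \<noteq> f" using gfacts[OF t] unfolding a_def f_def by auto
      have f: "f < N" unfolding f_def N_def by (rule first_lt[of "bidx n a" r n, OF a(2) npos[OF a(2)]])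
      have bf: "bidx n f = bidx n a" unfolding f_def by (rule bidx_first[of n "bidx n a", OF npos[OF a(2)]])
      have "(P' * P) $$ (i,j) = (\<Sum>k<N. (if k = a then 1 else if k = f then -1 else 0) * P $$ (k,j))"
        unfolding e by (rule sum.cong) (use False i in \<open>auto simp: P'_def a_def f_def t_def\<close>)
      also have "\<dots> = P $$ (a,j) - P $$ (f,j)" by (rule sum_delta2[OF a(1) f a(3)])
      also have "\<dots> = 1\<^sub>m N $$ (i,j)"
      proof (cases "j < r")
        case True
        thus ?thesis using a f bf j i False by (auto simp: P_def)
      next
        case jr: False
        have jt: "j - r < K" using j jr NK by simp
        have "f \<noteq> gmap n (j - r)"
          unfolding f_def using gmap_not_first[of "j - r" n r "bidx n a", OF jt[unfolded K_def] a(2) npos[OF a(2)]] by simp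
        moreover have "a = gmap n (j - r) \<longleftrightarrow> i = j"
        proof
          assume "a = gmap n (j - r)"
          hence "t = j - r" using gmap_inj[of t n r "j - r"] t jt unfolding a_def K_def by simp
          thus "i = j" using False jr unfolding t_def by simp
        qed (simp add: a_def t_def)
        ultimately show ?thesis using a f j i False jr by (auto simp: P_def)
      qed
      finally show ?thesis .
    qed
  qed (use P'c Pc in auto)
  have detP: "det P \<noteq> 0"
  proof -
    have "det P' * det P = 1" using det_mult[OF P'c Pc] PP by (simp add: det_one)
    thus ?thesis by auto
  qed
  have MP: "M * P = P * T"
  proof (rule eq_matI)
    fix p c assume p: "p < dim_row (P * T)" and c: "c < dim_col (P * T)"
    hence p: "p < N" and c: "c < N" using Pc Tc by auto
    define b where "b = bidx n p"
    have b: "b < r" unfolding b_def using bidx_props(1)[of p n r] p N_def by simp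
    have LHS: "(M * P) $$ (p,c) = (\<Sum>k<N. M $$ (p,k) * P $$ (k,c))" by (rule mult_entry[OF Mc Pc p c])
    have RHS: "(P * T) $$ (p,c) = (\<Sum>k<r. P $$ (p,k) * T $$ (k,c)) + (\<Sum>t<K. P $$ (p, r + t) * T $$ (r + t, c))"
      unfolding mult_entry[OF Pc Tc p c] NK by (rule sum_split_add)
    have R1: "(\<Sum>k<r. P $$ (p,k) * T $$ (k,c)) = T $$ (b, c) / sqrt (n b)"
    proof -
      have "(\<Sum>k<r. P $$ (p,k) * T $$ (k,c)) = (\<Sum>k<r. (if k = b then 1 / sqrt (n b) else 0) * T $$ (k,c))"
        by (rule sum.cong) (use p NK in \<open>auto simp: P_def b_def\<close>)
      also have "\<dots> = T $$ (b, c) / sqrt (n b)" by (subst sum_delta_left[OF b]) simp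
      finally show ?thesis .
    qed
    have R2: "(\<Sum>t<K. P $$ (p, r + t) * T $$ (r + t, c)) =
        (if p \<noteq> offset n b then T $$ (r + hmap n p, c) else 0)"
    proof -
      have "(\<Sum>t<K. P $$ (p, r + t) * T $$ (r + t, c)) =
          (\<Sum>t<K. if p \<noteq> offset n b \<and> t = hmap n p then T $$ (r + t, c) else 0)"
      proof (rule sum.cong[OF refl])
        fix t assume "t \<in> {..<K}"
        hence t: "t < K" by simp
        have "p = gmap n t \<longleftrightarrow> p \<noteq> offset n b \<and> t = hmap n p"
        proof
          assume "p = gmap n t" thus "p \<noteq> offset n b \<and> t = hmap n p" using gfacts[OF t] b_def by auto
        next
          assume "p \<noteq> offset n b \<and> t = hmap n p"
          thus "p = gmap n t" using hmap_props(2)[of p n r] p b_def N_def by auto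
        qed
        thus "P $$ (p, r + t) * T $$ (r + t, c) = (if p \<noteq> offset n b \<and> t = hmap n p then T $$ (r + t, c) else 0)"
          using p t NK by (auto simp: P_def)
      qed
      also have "\<dots> = (if p \<noteq> offset n b then T $$ (r + hmap n p, c) else 0)"
        using hmap_props(1)[of p n r] p b_def N_def K_def by (auto simp: sum.delta)
      finally show ?thesis .
    qed
    show "(M * P) $$ (p,c) = (P * T) $$ (p,c)"
    proof (cases "c < r")
      case True
      have "(M * P) $$ (p,c) = (\<Sum>k<N. if bidx n k = c then M $$ (p,k) / sqrt (n c) else 0)"
        unfolding LHS by (rule sum.cong) (use True c in \<open>auto simp: P_def\<close>)
      also have "\<dots> = (\<Sum>j<r. \<Sum>u<n j. if bidx n (offset n j + u) = c then M $$ (p, offset n j + u) / sqrt (n c) else 0)"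
        unfolding N_def by (rule sum_blocks)
      also have "\<dots> = (\<Sum>j<r. if j = c then (\<Sum>u<n c. M $$ (p, offset n c + u) / sqrt (n c)) else 0)"
        by (rule sum.cong) (auto simp: bidx_eq)
      also have "\<dots> = (\<Sum>u<n c. M $$ (p, offset n c + u)) / sqrt (n c)"
        using True by (simp add: sum.delta sum_divide_distrib)
      also have "\<dots> = F $$ (b, c) / sqrt (n b)"
        using rows[OF p[unfolded N_def] True] sqpos[OF True] unfolding b_def by simp
      also have "\<dots> = (P * T) $$ (p,c)"
        unfolding RHS R1 R2 using Tent[of b c] Tent[of "r + hmap n p" c] True b c NK
          hmap_props(1)[of p n r] p b_def N_def K_def by auto
      finally show ?thesis .
    next
      case False
      define t where "t = c - r"
      have t: "t < K" using c False NK unfolding t_def by simp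
      have "(M * P) $$ (p,c) = (\<Sum>k<N. M $$ (p,k) * (if k = gmap n t then 1 else 0))"
        unfolding LHS by (rule sum.cong) (use False c in \<open>auto simp: P_def t_def\<close>)
      also have "\<dots> = M $$ (p, gmap n t)" by (simp add: sum_delta_right[OF gfacts(1)[OF t]])
      also have "\<dots> = (P * T) $$ (p,c)"
      proof -
        have Tb: "T $$ (b, c) = sqrt (n b) * M $$ (offset n b, gmap n t)"
          using Tent[of b c] b c False t by (simp add: Y_def t_def)
        show ?thesis
        proof (cases "p = offset n b")
          case True
          thus ?thesis unfolding RHS R1 R2 Tb using sqpos[OF b] by simp
        next
          case nf: False
          have h: "hmap n p < K" "gmap n (hmap n p) = p"
            using hmap_props[of p n r] p nf b_def N_def K_def by auto
          have "T $$ (r + hmap n p, c) = Z $$ (hmap n p, t)"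
            using Tent[of "r + hmap n p" c] h c False NK by (simp add: t_def)
          also have "\<dots> = M $$ (p, gmap n t) - M $$ (offset n b, gmap n t)"
            using h t unfolding Z_def Zmat_def K_def b_def by simp
          finally show ?thesis unfolding RHS R1 R2 Tb using sqpos[OF b] nf by simp
        qed
      qed
      finally show ?thesis .
    qed
  qed (use Pc Tc Mc in auto)
  have I1: "x \<cdot>\<^sub>m 1\<^sub>m N \<in> carrier_mat N N" by simp
  have e1: "(x \<cdot>\<^sub>m 1\<^sub>m N - M) * P = x \<cdot>\<^sub>m P - M * P"
    using minus_mult_distrib_mat[OF I1 Mc Pc] mult_smult_assoc_mat[of "1\<^sub>m N" N N P N x] Pc by simp
  have e2: "P * (x \<cdot>\<^sub>m 1\<^sub>m N - T) = x \<cdot>\<^sub>m P - P * T"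
    using mult_minus_distrib_mat[OF Pc I1 Tc] mult_smult_distrib[of P N N "1\<^sub>m N" N x] Pc by simp
  have "det (x \<cdot>\<^sub>m 1\<^sub>m N - M) * det P = det P * det (x \<cdot>\<^sub>m 1\<^sub>m N - T)"
  proof -
    have c1: "x \<cdot>\<^sub>m 1\<^sub>m N - M \<in> carrier_mat N N" by (rule minus_carrier_mat[OF Mc])
    have c2: "x \<cdot>\<^sub>m 1\<^sub>m N - T \<in> carrier_mat N N" by (rule minus_carrier_mat[OF Tc])
    have "det (x \<cdot>\<^sub>m 1\<^sub>m N - M) * det P = det ((x \<cdot>\<^sub>m 1\<^sub>m N - M) * P)"
      by (rule det_mult[OF c1 Pc, symmetric])
    also have "\<dots> = det (P * (x \<cdot>\<^sub>m 1\<^sub>m N - T))" unfolding e1 e2 MP ..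
    also have "\<dots> = det P * det (x \<cdot>\<^sub>m 1\<^sub>m N - T)" by (rule det_mult[OF Pc c2])
    finally show ?thesis .
  qed
  hence d1: "det (x \<cdot>\<^sub>m 1\<^sub>m N - M) = det (x \<cdot>\<^sub>m 1\<^sub>m N - T)" using detP by (simp add: mult.commute)
  have "x \<cdot>\<^sub>m 1\<^sub>m N - T = four_block_mat (x \<cdot>\<^sub>m 1\<^sub>m r - F) (0\<^sub>m r K - Y) (0\<^sub>m K r) (x \<cdot>\<^sub>m 1\<^sub>m K - Z)"
    by (rule eq_matI) (use F Yc Zc Tc NK Tent in \<open>auto simp: index_mat_four_block\<close>)
  hence "det (x \<cdot>\<^sub>m 1\<^sub>m N - T) = det (x \<cdot>\<^sub>m 1\<^sub>m r - F) * det (x \<cdot>\<^sub>m 1\<^sub>m K - Z)"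
    using det_four_block_mat_lower_left_zero[of "x \<cdot>\<^sub>m 1\<^sub>m r - F" r "0\<^sub>m r K - Y" K "0\<^sub>m K r" "x \<cdot>\<^sub>m 1\<^sub>m K - Z"]
      minus_carrier_mat[OF F] minus_carrier_mat[OF Yc] minus_carrier_mat[OF Zc] by auto
  thus ?thesis using d1 unfolding N_def K_def Z_def by simp
qed



lemma blockdiag_det:
  fixes W :: "real mat"
  assumes "W \<in> carrier_mat (offset m r) (offset m r)"
    and "\<And>a b. a < offset m r \<Longrightarrow> b < offset m r \<Longrightarrow> bidx m a \<noteq> bidx m b \<Longrightarrow> W $$ (a,b) = 0"
  shows "det W = (\<Prod>i<r. det (mat (m i) (m i) (\<lambda>(a,b). W $$ (offset m i + a, offset m i + b))))"
  using assms
proof (induction r arbitrary: W)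
  case 0
  hence "W = 1\<^sub>m 0" by (intro eq_matI) auto
  thus ?case by (simp add: det_one)
next
  case (Suc r)
  define o' where "o' = offset m r"
  define k where "k = m r"
  have Wc: "W \<in> carrier_mat (o' + k) (o' + k)" using Suc.prems(1) unfolding o'_def k_def offset_Suc .
  define W1 where "W1 = mat o' o' (\<lambda>(a,b). W $$ (a,b))"
  define W2 where "W2 = mat o' k (\<lambda>(a,b). W $$ (a, o' + b))"
  define W4 where "W4 = mat k k (\<lambda>(a,b). W $$ (o' + a, o' + b))"
  have bl: "bidx m a = r" if "o' \<le> a" "a < o' + k" for a
    using bidx_eq[of "a - o'" m r] that unfolding o'_def k_def by simp
  have bs: "bidx m b < r" if "b < o'" for b
    using bidx_props(1)[of b m r] that unfolding o'_def by simp
  have W: "W = four_block_mat W1 W2 (0\<^sub>m k o') W4"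
  proof (rule eq_matI)
    fix a b assume a: "a < dim_row (four_block_mat W1 W2 (0\<^sub>m k o') W4)"
      and b: "b < dim_col (four_block_mat W1 W2 (0\<^sub>m k o') W4)"
    hence a': "a < o' + k" and b': "b < o' + k" by (auto simp: W1_def W4_def)
    have z: "W $$ (a, b) = 0" if "o' \<le> a" "b < o'"
      using Suc.prems(2)[of a b] bl[of a] bs[of b] that a' b' Wc by (auto simp: o'_def k_def offset_Suc)
    show "W $$ (a,b) = four_block_mat W1 W2 (0\<^sub>m k o') W4 $$ (a,b)"
      using a b a' b' z by (auto simp: W1_def W2_def W4_def)
  qed (use Wc in \<open>auto simp: W1_def W4_def\<close>)
  have "det W = det W1 * det W4"
    by (subst W, rule det_four_block_mat_lower_left_zero) (auto simp: W1_def W2_def W4_def)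
  moreover have "det W1 = (\<Prod>i<r. det (mat (m i) (m i) (\<lambda>(a,b). W $$ (offset m i + a, offset m i + b))))"
  proof -
    have "det W1 = (\<Prod>i<r. det (mat (m i) (m i) (\<lambda>(a,b). W1 $$ (offset m i + a, offset m i + b))))"
    proof (rule Suc.IH)
      show "W1 \<in> carrier_mat (offset m r) (offset m r)" unfolding W1_def o'_def by simp
      fix a b assume "a < offset m r" "b < offset m r" "bidx m a \<noteq> bidx m b"
      thus "W1 $$ (a, b) = 0" using Suc.prems(2)[of a b] unfolding W1_def o'_def by (auto simp: offset_Suc)
    qed
    also have "\<dots> = (\<Prod>i<r. det (mat (m i) (m i) (\<lambda>(a,b). W $$ (offset m i + a, offset m i + b))))"
    proof (rule prod.cong[OF refl], rule arg_cong[of _ _ det], rule eq_matI)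
      fix i a b assume i: "i \<in> {..<r}"
        and a: "a < dim_row (mat (m i) (m i) (\<lambda>(a,b). W $$ (offset m i + a, offset m i + b)))"
        and b: "b < dim_col (mat (m i) (m i) (\<lambda>(a,b). W $$ (offset m i + a, offset m i + b)))"
      have "offset m i + a < o'" "offset m i + b < o'"
        using offset_lt[of i r a m] offset_lt[of i r b m] i a b unfolding o'_def by auto
      thus "mat (m i) (m i) (\<lambda>(a,b). W1 $$ (offset m i + a, offset m i + b)) $$ (a, b) =
            mat (m i) (m i) (\<lambda>(a,b). W $$ (offset m i + a, offset m i + b)) $$ (a, b)"
        using a b by (simp add: W1_def)
    qed auto
    finally show ?thesis .
  qed
  ultimately show ?case unfolding W4_def o'_def k_def by simp
qed



lemma hjoin_E_char:
  assumes "i < r" "j < r" "u < n i" "v < n j"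
  shows "hjoin_E r H n E (offset n i + u) (offset n j + v) \<longleftrightarrow> (i = j \<and> E i u v) \<or> H i j"
proof
  assume "hjoin_E r H n E (offset n i + u) (offset n j + v)"
  then obtain i' j' u' v' where h: "i' < r" "j' < r" "u' < n i'" "v' < n j'"
    "offset n i + u = offset n i' + u'" "offset n j + v = offset n j' + v'" "(i' = j' \<and> E i' u' v') \<or> H i' j'"
    unfolding hjoin_E_def by blast
  have "i = i' \<and> u = u'" by (rule offset_inj) (use h assms in auto)
  moreover have "j = j' \<and> v = v'" by (rule offset_inj) (use h assms in auto)
  ultimately show "(i = j \<and> E i u v) \<or> H i j" using h by auto
next
  assume "(i = j \<and> E i u v) \<or> H i j"
  thus "hjoin_E r H n E (offset n i + u) (offset n j + v)" unfolding hjoin_E_def using assms by blast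
qed

lemma cycle_adj_irrefl: "3 \<le> r \<Longrightarrow> \<not> cycle_adj r i i"
proof
  assume r: "3 \<le> r" and c: "cycle_adj r i i"
  hence i: "i < r" and e: "i = (i + 1) mod r" unfolding cycle_adj_def by auto
  show False
  proof (cases "i + 1 < r")
    case True thus False using e by simp
  next
    case False
    hence "i + 1 = r" using i by simp
    thus False using e r by simp
  qed
qed

lemma mod_succ: assumes "b < (r::nat)" shows "(b + 1) mod r = (if b + 1 = r then 0 else b + 1)"
proof (cases "b + 1 = r")
  case False
  hence "b + 1 < r" using assms by linarith
  thus ?thesis by simp
qed simp

lemma F_adj_iff:
  assumes r: "3 \<le> r" and b: "b < r" and q: "q < r" and bq: "b \<noteq> q"
  shows "(q = b + 1 \<or> b = q + 1 \<or> (b = 0 \<and> q = r - 1) \<or> (b = r - 1 \<and> q = 0)) \<longleftrightarrow> cycle_adj r b q"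
  unfolding cycle_adj_def mod_succ[OF b] mod_succ[OF q] using assms by auto

lemma card_as_sum: "card {w. w < (N::nat) \<and> P w} = (\<Sum>w<N. if P w then 1 else 0)"
proof -
  have "{w. w < N \<and> P w} = {w \<in> {..<N}. P w}" by auto
  hence "card {w. w < N \<and> P w} = (\<Sum>w\<in>{w \<in> {..<N}. P w}. 1)" by simp
  also have "\<dots> = (\<Sum>w<N. if P w then 1 else 0)" by (rule sum.inter_filter) simp
  finally show ?thesis .
qed

lemma cycN_sum: "cycN r n i = (\<Sum>j<r. if cycle_adj r i j then n j else 0)"
proof -
  have "{j. j < r \<and> cycle_adj r i j} = {j \<in> {..<r}. cycle_adj r i j}" by auto
  moreover have "sum n {j \<in> {..<r}. cycle_adj r i j} = (\<Sum>j<r. if cycle_adj r i j then n j else 0)"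
    by (rule sum.inter_filter) simp
  ultimately show ?thesis unfolding cycN_def by simp
qed

lemma degree_join:
  assumes r: "3 \<le> r" and i: "i < r" and u: "u < n i"
    and reg: "regular (n i) (E i) (d i)"
  shows "degree (offset n r) (hjoin_E r (cycle_adj r) n E) (offset n i + u) = d i + cycN r n i"
proof -
  let ?EG = "hjoin_E r (cycle_adj r) n E"
  have "degree (offset n r) ?EG (offset n i + u) = (\<Sum>w<offset n r. if ?EG (offset n i + u) w then 1 else 0)"
    unfolding degree_def by (rule card_as_sum)
  also have "\<dots> = (\<Sum>j<r. \<Sum>v<n j. if ?EG (offset n i + u) (offset n j + v) then 1 else 0)"
    by (rule sum_blocks)
  also have "\<dots> = (\<Sum>j<r. \<Sum>v<n j. if (i = j \<and> E i u v) \<or> cycle_adj r i j then 1 else 0)"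
    by (intro sum.cong refl) (use i u in \<open>simp add: hjoin_E_char\<close>)
  also have "\<dots> = (\<Sum>j<r. (if j = i then d i else 0) + (if cycle_adj r i j then n j else 0))"
  proof (rule sum.cong[OF refl])
    fix j assume j: "j \<in> {..<r}"
    show "(\<Sum>v<n j. if (i = j \<and> E i u v) \<or> cycle_adj r i j then 1 else 0) =
        (if j = i then d i else 0) + (if cycle_adj r i j then n j else 0)"
    proof (cases "j = i")
      case True
      have "d i = card {v. v < n i \<and> E i u v}" using reg u unfolding regular_def degree_def by auto
      thus ?thesis using True cycle_adj_irrefl[OF r, of i] by (simp add: card_as_sum)
    next
      case False thus ?thesis by simp
    qed
  qed
  also have "\<dots> = d i + cycN r n i" unfolding sum.distrib cycN_sum using i by (simp add: sum.delta)
  finally show ?thesis .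
qed

lemma MG_entry:
  assumes r: "3 \<le> r" and i: "i < r" and j: "j < r" and u: "u < n i" and v: "v < n j"
    and reg: "regular (n i) (E i) (d i)"
  shows "deformed_lap (offset n r) (hjoin_E r (cycle_adj r) n E) s $$ (offset n i + u, offset n j + v) =
     (if i = j \<and> u = v then 1 + s^2 * (real (d i) + real (cycN r n i) - 1) else 0)
     - s * (if (i = j \<and> E i u v) \<or> cycle_adj r i j then 1 else 0)"
proof -
  have p: "offset n i + u < offset n r" by (rule offset_lt[of i r u n, OF i u])
  have q: "offset n j + v < offset n r" by (rule offset_lt[of j r v n, OF j v])
  have eq: "offset n i + u = offset n j + v \<longleftrightarrow> i = j \<and> u = v"
    using offset_inj[of u n i v j] u v by auto
  show ?thesis
    unfolding deformed_lap_def adj_mat_def deg_mat_def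
    using p q eq degree_join[of r i u n E d, OF r i u reg] hjoin_E_char[OF i j u v, of "cycle_adj r" E]
    by (auto simp: algebra_simps)
qed



lemma real_card_sum: "real (card {u. u < (N::nat) \<and> P u}) = (\<Sum>u<N. if P u then 1 else 0)"
  unfolding card_as_sum of_nat_sum by (intro sum.cong) auto

lemma rowsum_same:
  assumes r: "3 \<le> r" and i: "i < r" and v: "v < n i" and reg: "regular (n i) (E i) (d i)"
  shows "(\<Sum>u<n i. deformed_lap (offset n r) (hjoin_E r (cycle_adj r) n E) s $$ (offset n i + v, offset n i + u))
      = lam1M r n d s i"
proof -
  define \<alpha> where "\<alpha> = 1 + s^2 * (real (d i) + real (cycN r n i) - 1)"
  have "(\<Sum>u<n i. deformed_lap (offset n r) (hjoin_E r (cycle_adj r) n E) s $$ (offset n i + v, offset n i + u))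
      = (\<Sum>u<n i. (if u = v then \<alpha> else 0) - s * (if E i v u then 1 else 0))"
  proof (rule sum.cong[OF refl])
    fix u assume "u \<in> {..<n i}"
    hence u: "u < n i" by simp
    show "deformed_lap (offset n r) (hjoin_E r (cycle_adj r) n E) s $$ (offset n i + v, offset n i + u)
        = (if u = v then \<alpha> else 0) - s * (if E i v u then 1 else 0)"
      using MG_entry[where n=n and E=E and d=d and s=s and u=v and v=u, OF r i i v u reg] cycle_adj_irrefl[OF r, of i]
      by (auto simp: \<alpha>_def)
  qed
  also have "\<dots> = \<alpha> - s * real (d i)"
  proof -
    have d: "real (d i) = (\<Sum>u<n i. if E i v u then 1 else 0)"
    proof -
      have "d i = card {w. w < n i \<and> E i v w}" using reg v unfolding regular_def degree_def by auto
      thus ?thesis using real_card_sum[of "n i" "E i v"] by simp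
    qed
    show ?thesis unfolding sum_subtractf sum_distrib_left[symmetric] d using v by (simp add: sum.delta')
  qed
  also have "\<dots> = lam1M r n d s i" unfolding \<alpha>_def lam1M_def by (simp add: algebra_simps)
  finally show ?thesis .
qed

lemma rowsum_other:
  assumes r: "3 \<le> r" and i: "i < r" and q: "q < r" and iq: "i \<noteq> q" and v: "v < n i"
    and reg: "regular (n i) (E i) (d i)"
  shows "(\<Sum>u<n q. deformed_lap (offset n r) (hjoin_E r (cycle_adj r) n E) s $$ (offset n i + v, offset n q + u))
      = - s * (if cycle_adj r i q then real (n q) else 0)"
proof -
  have "(\<Sum>u<n q. deformed_lap (offset n r) (hjoin_E r (cycle_adj r) n E) s $$ (offset n i + v, offset n q + u))
      = (\<Sum>u<n q. - s * (if cycle_adj r i q then 1 else 0))"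
  proof (rule sum.cong[OF refl])
    fix u assume "u \<in> {..<n q}"
    hence u: "u < n q" by simp
    show "deformed_lap (offset n r) (hjoin_E r (cycle_adj r) n E) s $$ (offset n i + v, offset n q + u)
        = - s * (if cycle_adj r i q then 1 else 0)"
      using MG_entry[where n=n and E=E and d=d and s=s and u=v and v=u, OF r i q v u reg] iq by auto
  qed
  thus ?thesis by simp
qed

lemma F_entry:
  assumes "b < r" "q < r"
  shows "F_mat r n d s $$ (b,q) = (if b = q then lam1M r n d s b
     else if q = b + 1 \<or> b = q + 1 \<or> (b = 0 \<and> q = r - 1) \<or> (b = r - 1 \<and> q = 0)
          then - s * sqrt (real (n b) * real (n q)) else 0)"
  unfolding F_mat_def using assms by simp

lemma rows_hyp:
  assumes r: "3 \<le> r" and reg: "\<And>i. i < r \<Longrightarrow> regular (n i) (E i) (d i)"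
    and n1: "\<And>i. i < r \<Longrightarrow> 1 \<le> n i"
    and p: "p < offset n r" and q: "q < r"
  shows "(\<Sum>u<n q. deformed_lap (offset n r) (hjoin_E r (cycle_adj r) n E) s $$ (p, offset n q + u))
     = F_mat r n d s $$ (bidx n p, q) * sqrt (n q) / sqrt (n (bidx n p))"
proof -
  obtain b v where bv: "b < r" "v < n b" "p = offset n b + v" "bidx n p = b"
    using block_decomp[OF p] by blast
  have sb: "sqrt (real (n b)) > 0" using n1[OF bv(1)] by simp
  have sq: "sqrt (real (n q)) > 0" using n1[OF q] by simp
  show ?thesis
  proof (cases "b = q")
    case True
    thus ?thesis using rowsum_same[where n=n and E=E and d=d and s=s, OF r bv(1) bv(2) reg[OF bv(1)]] bv F_entry[OF bv(1) q] sb by simp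
  next
    case False
    have "(\<Sum>u<n q. deformed_lap (offset n r) (hjoin_E r (cycle_adj r) n E) s $$ (p, offset n q + u))
       = - s * (if cycle_adj r b q then real (n q) else 0)"
      unfolding bv(3) by (rule rowsum_other[where n=n and E=E and d=d and s=s, OF r bv(1) q False bv(2) reg[OF bv(1)]])
    also have "\<dots> = F_mat r n d s $$ (b, q) * sqrt (n q) / sqrt (n b)"
    proof -
      have e: "- s * sqrt (real (n b) * real (n q)) * sqrt (n q) / sqrt (n b) = - s * real (n q)"
        using sb sq by (simp add: real_sqrt_mult real_sqrt_mult_self field_simps)
      show ?thesis unfolding F_entry[OF bv(1) q] F_adj_iff[OF r bv(1) q False] using False e
        by auto
    qed
    finally show ?thesis using bv by simp
  qed
qed



lemma prod_mset_image_sum: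
  "(\<Prod>a\<in>#(\<Sum>i<(r::nat). f i). g a) = (\<Prod>i<r. \<Prod>a\<in>#f i. (g a :: 'b::comm_monoid_mult))"
  by (induction r) (auto simp: image_mset_union)

lemma Zoff:
  assumes r: "3 \<le> r" and reg: "\<And>i. i < r \<Longrightarrow> regular (n i) (E i) (d i)"
    and a: "a < offset (m1 n) r" and c: "c < offset (m1 n) r" and ne: "bidx (m1 n) a \<noteq> bidx (m1 n) c"
  shows "Zmat r n (deformed_lap (offset n r) (hjoin_E r (cycle_adj r) n E) s) $$ (a,c) = 0"
proof -
  obtain ia ua where A: "ia < r" "ua < m1 n ia" "a = offset (m1 n) ia + ua" "bidx (m1 n) a = ia"
    using block_decomp[OF a] by blast
  obtain ic uc where C: "ic < r" "uc < m1 n ic" "c = offset (m1 n) ic + uc" "bidx (m1 n) c = ic"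
    using block_decomp[OF c] by blast
  have ga: "gmap n a = offset n ia + (ua + 1)" using A gmap_block[of ua n ia] by (simp add: m1_def)
  have gc: "gmap n c = offset n ic + (uc + 1)" using C gmap_block[of uc n ic] by (simp add: m1_def)
  have ua: "ua + 1 < n ia" and uc: "uc + 1 < n ic" using A C by (auto simp: m1_def)
  have ba: "bidx n (gmap n a) = ia" unfolding ga by (rule bidx_eq[of "ua + 1" n ia, OF ua])
  have i0: "0 < n ia" using ua by simp
  have neq: "ia \<noteq> ic" using ne A C by simp
  note e1 = MG_entry[where n=n and E=E and d=d and s=s, OF r A(1) C(1) ua uc reg[OF A(1)]]
  note e2 = MG_entry[where n=n and E=E and d=d and s=s and u=0, OF r A(1) C(1) i0 uc reg[OF A(1)]]
  show ?thesis unfolding Zmat_def using a c ga gc ba e1 e2 neq by simp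
qed

theorem corollary6p6:
  fixes r :: nat and n d :: "nat \<Rightarrow> nat" and E :: "nat \<Rightarrow> nat \<Rightarrow> nat \<Rightarrow> bool"
    and lam :: "nat \<Rightarrow> nat \<Rightarrow> real" and s :: real
  assumes "r \<ge> 3"
    and "\<And>i. i < r \<Longrightarrow> simple_graph (n i) (E i)"
    and "\<And>i. i < r \<Longrightarrow> n i \<ge> 1"
    and "\<And>i. i < r \<Longrightarrow> regular (n i) (E i) (d i)"
    and "\<And>i. i < r \<Longrightarrow> spec (adj_mat (n i) (E i)) = mset (map (lam i) [0..<n i])"
    and "\<And>i. i < r \<Longrightarrow> lam i 0 = real (d i)"
  shows "spec (deformed_lap (hjoin_order r n) (hjoin_E r (cycle_adj r) n E) s) =
           (\<Sum>i<r. mset (map (\<lambda>k. s^2 * (real (d i) + real (cycN r n i) - 1) - s * lam i k + 1)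
                              [1..<n i]))
           + spec (F_mat r n d s)"
proof -
  define NN where "NN = offset n r"
  define MG where "MG = deformed_lap NN (hjoin_E r (cycle_adj r) n E) s"
  define F where "F = F_mat r n d s"
  define Z where "Z = Zmat r n MG"
  define K where "K = offset (m1 n) r"
  define B where "B i = mat (m1 n i) (m1 n i) (\<lambda>(a,c). Z $$ (offset (m1 n) i + a, offset (m1 n) i + c))" for i
  define \<mu> where "\<mu> i = (\<lambda>k. s^2 * (real (d i) + real (cycN r n i) - 1) - s * lam i k + 1)" for i
  have r: "3 \<le> r" using assms(1) .
  have reg: "\<And>i. i < r \<Longrightarrow> regular (n i) (E i) (d i)" using assms(4) .
  have n1: "\<And>i. i < r \<Longrightarrow> 1 \<le> n i" using assms(3) .
  have MGc: "MG \<in> carrier_mat NN NN" unfolding MG_def deformed_lap_def adj_mat_def deg_mat_def by auto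
  have Fc: "F \<in> carrier_mat r r" unfolding F_def F_mat_def by simp
  have Zc: "Z \<in> carrier_mat K K" unfolding Z_def Zmat_def K_def by simp
  have Bc: "B i \<in> carrier_mat (m1 n i) (m1 n i)" for i unfolding B_def by simp
  have red: "det (x \<cdot>\<^sub>m 1\<^sub>m NN - MG) = det (x \<cdot>\<^sub>m 1\<^sub>m r - F) * det (x \<cdot>\<^sub>m 1\<^sub>m K - Z)" for x
    unfolding NN_def K_def Z_def
  proof (rule reduction)
    show "\<forall>i<r. 1 \<le> n i" using n1 by auto
    show "MG \<in> carrier_mat (offset n r) (offset n r)" using MGc unfolding NN_def .
    show "F \<in> carrier_mat r r" by (rule Fc)
    fix p q assume "p < offset n r" "q < r"
    thus "(\<Sum>u<n q. MG $$ (p, offset n q + u)) = F $$ (bidx n p, q) * sqrt (real (n q)) / sqrt (real (n (bidx n p)))"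
      unfolding MG_def NN_def F_def using rows_hyp[where n=n and E=E and d=d and s=s, OF r reg n1] by blast
  qed
  have bd: "det (x \<cdot>\<^sub>m 1\<^sub>m K - Z) = (\<Prod>i<r. det (x \<cdot>\<^sub>m 1\<^sub>m (m1 n i) - B i))" for x
  proof -
    have "det (x \<cdot>\<^sub>m 1\<^sub>m K - Z) = (\<Prod>i<r. det (mat (m1 n i) (m1 n i)
        (\<lambda>(a,c). (x \<cdot>\<^sub>m 1\<^sub>m K - Z) $$ (offset (m1 n) i + a, offset (m1 n) i + c))))"
      unfolding K_def
    proof (rule blockdiag_det)
      show "x \<cdot>\<^sub>m 1\<^sub>m (offset (m1 n) r) - Z \<in> carrier_mat (offset (m1 n) r) (offset (m1 n) r)"
        using minus_carrier_mat[OF Zc] unfolding K_def by simp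
      fix a c assume a: "a < offset (m1 n) r" and c: "c < offset (m1 n) r" and ne: "bidx (m1 n) a \<noteq> bidx (m1 n) c"
      have "Z $$ (a,c) = 0" unfolding Z_def MG_def NN_def by (rule Zoff[OF r reg a c ne])
      moreover have "a \<noteq> c" using ne by auto
      ultimately show "(x \<cdot>\<^sub>m 1\<^sub>m (offset (m1 n) r) - Z) $$ (a, c) = 0"
        using a c Zc unfolding K_def by simp
    qed
    also have "\<dots> = (\<Prod>i<r. det (x \<cdot>\<^sub>m 1\<^sub>m (m1 n i) - B i))"
    proof (rule prod.cong[OF refl], rule arg_cong[of _ _ det], rule eq_matI)
      fix i a c assume i: "i \<in> {..<r}" and a: "a < dim_row (x \<cdot>\<^sub>m 1\<^sub>m (m1 n i) - B i)"
        and c: "c < dim_col (x \<cdot>\<^sub>m 1\<^sub>m (m1 n i) - B i)"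
      have a': "a < m1 n i" and c': "c < m1 n i" using a c Bc[of i] by auto
      have "offset (m1 n) i + a < K" "offset (m1 n) i + c < K"
        using offset_lt[of i r a "m1 n"] offset_lt[of i r c "m1 n"] i a' c' unfolding K_def by auto
      thus "mat (m1 n i) (m1 n i) (\<lambda>(a,c). (x \<cdot>\<^sub>m 1\<^sub>m K - Z) $$ (offset (m1 n) i + a, offset (m1 n) i + c)) $$ (a, c)
          = (x \<cdot>\<^sub>m 1\<^sub>m (m1 n i) - B i) $$ (a, c)"
        using a' c' Zc Bc[of i] by (simp add: B_def)
    qed (auto simp: B_def)
    finally show ?thesis .
  qed
  have loc: "char_poly (B i) = (\<Prod>a\<in>#mset (map (\<mu> i) [1..<n i]). [:- a, 1:])" if i: "i < r" for i
  proof -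
    define n' where "n' = (\<lambda>_::nat. n i)"
    define Mi where "Mi = mat (n i) (n i) (\<lambda>(a,c). MG $$ (offset n i + a, offset n i + c))"
    define F1 where "F1 = mat 1 1 (\<lambda>_. lam1M r n d s i)"
    define \<alpha> where "\<alpha> = 1 + s^2 * (real (d i) + real (cycN r n i) - 1)"
    define Ai where "Ai = adj_mat (n i) (E i)"
    have o1: "offset n' 1 = n i" unfolding n'_def offset_def by simp
    have o1': "offset (m1 n') 1 = m1 n i" unfolding n'_def offset_def m1_def by simp
    have Aic: "Ai \<in> carrier_mat (n i) (n i)" unfolding Ai_def adj_mat_def by simp
    have Mic: "Mi \<in> carrier_mat (n i) (n i)" unfolding Mi_def by simp
    have F1c: "F1 \<in> carrier_mat 1 1" unfolding F1_def by simp
    have Aisym: "Ai $$ (a,c) = Ai $$ (c,a)" if "a < n i" "c < n i" for a c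
      using assms(2)[OF i] that unfolding Ai_def adj_mat_def simple_graph_def by auto
    have cpA: "char_poly Ai = (\<Prod>a\<in>#mset (map (lam i) [0..<n i]). [:- a, 1:])"
      using spec_char_poly[OF Aic Aisym] assms(5)[OF i] unfolding Ai_def by simp
    have MiA: "Mi = \<alpha> \<cdot>\<^sub>m 1\<^sub>m (n i) - s \<cdot>\<^sub>m Ai"
    proof (rule eq_matI)
      fix a c assume "a < dim_row (\<alpha> \<cdot>\<^sub>m 1\<^sub>m (n i) - s \<cdot>\<^sub>m Ai)" "c < dim_col (\<alpha> \<cdot>\<^sub>m 1\<^sub>m (n i) - s \<cdot>\<^sub>m Ai)"
      hence a: "a < n i" and c: "c < n i" using Aic by auto
      show "Mi $$ (a,c) = (\<alpha> \<cdot>\<^sub>m 1\<^sub>m (n i) - s \<cdot>\<^sub>m Ai) $$ (a,c)"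
        using MG_entry[where n=n and E=E and d=d and s=s, OF r i i a c reg[OF i]] cycle_adj_irrefl[OF r, of i] a c Aic
        unfolding Mi_def MG_def NN_def Ai_def adj_mat_def \<alpha>_def by auto
    qed (use Aic in \<open>auto simp: Mi_def\<close>)
    have cpM: "char_poly Mi = (\<Prod>a\<in>#mset (map (lam i) [0..<n i]). [:- (\<alpha> - s * a), 1:])"
      unfolding MiA by (rule cp_affine[OF Aic cpA])
    have redi: "det (x \<cdot>\<^sub>m 1\<^sub>m (n i) - Mi) = det (x \<cdot>\<^sub>m 1\<^sub>m 1 - F1) * det (x \<cdot>\<^sub>m 1\<^sub>m (m1 n i) - Zmat 1 n' Mi)" for x
    proof -
      have "det (x \<cdot>\<^sub>m 1\<^sub>m (offset n' 1) - Mi) = det (x \<cdot>\<^sub>m 1\<^sub>m 1 - F1) * det (x \<cdot>\<^sub>m 1\<^sub>m (offset (m1 n') 1) - Zmat 1 n' Mi)"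
      proof (rule reduction)
        show "\<forall>i<1. 1 \<le> n' i" using n1[OF i] unfolding n'_def by auto
        show "Mi \<in> carrier_mat (offset n' 1) (offset n' 1)" using Mic unfolding o1 .
        show "F1 \<in> carrier_mat 1 1" by (rule F1c)
        fix p q assume p: "p < offset n' 1" and q: "q < (1::nat)"
        have p': "p < n i" using p o1 by simp
        have b0: "bidx n' p < 1" using bidx_props(1)[of p n' 1] p by simp
        have "(\<Sum>u<n' q. Mi $$ (p, offset n' q + u)) = (\<Sum>u<n i. MG $$ (offset n i + p, offset n i + u))"
          using q p' unfolding n'_def Mi_def by (intro sum.cong) auto
        also have "\<dots> = lam1M r n d s i"
          unfolding MG_def NN_def by (rule rowsum_same[where n=n and E=E and d=d and s=s, OF r i p' reg[OF i]])
        finally show "(\<Sum>u<n' q. Mi $$ (p, offset n' q + u)) = F1 $$ (bidx n' p, q) * sqrt (real (n' q)) / sqrt (real (n' (bidx n' p)))"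
          using b0 q n1[OF i] unfolding F1_def n'_def by simp
      qed
      thus ?thesis unfolding o1 o1' .
    qed
    have ZB: "Zmat 1 n' Mi = B i"
    proof (rule eq_matI)
      fix a c assume "a < dim_row (B i)" "c < dim_col (B i)"
      hence a: "a < m1 n i" and c: "c < m1 n i" using Bc[of i] by auto
      have a1: "a < n' 0 - 1" "c < n' 0 - 1" using a c unfolding n'_def m1_def by auto
      have g'a: "gmap n' a = a + 1" using gmap_block[of a n' 0] a1 by simp
      have g'c: "gmap n' c = c + 1" using gmap_block[of c n' 0] a1 by simp
      have b'a: "bidx n' (a + 1) = 0" using bidx_eq[of "a+1" n' 0] a1 by simp
      have ga: "gmap n (offset (m1 n) i + a) = offset n i + (a + 1)" using gmap_block[of a n i] a by (simp add: m1_def)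
      have gc: "gmap n (offset (m1 n) i + c) = offset n i + (c + 1)" using gmap_block[of c n i] c by (simp add: m1_def)
      have ba: "bidx n (offset n i + (a + 1)) = i" using bidx_eq[of "a+1" n i] a by (simp add: m1_def)
      have K1: "offset (m1 n) i + a < K" "offset (m1 n) i + c < K"
        using offset_lt[of i r a "m1 n"] offset_lt[of i r c "m1 n"] i a c unfolding K_def by auto
      have lt: "a + 1 < n i" "c + 1 < n i" "0 < n i" using a c by (auto simp: m1_def)
      have "Zmat 1 n' Mi $$ (a,c) = Mi $$ (gmap n' a, gmap n' c) - Mi $$ (offset n' (bidx n' (gmap n' a)), gmap n' c)"
        unfolding Zmat_def using a c o1' by simp
      also have "\<dots> = Mi $$ (a+1, c+1) - Mi $$ (0, c+1)" unfolding g'a g'c b'a by simp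
      also have "\<dots> = MG $$ (offset n i + (a+1), offset n i + (c+1)) - MG $$ (offset n i, offset n i + (c+1))"
        unfolding Mi_def using lt by simp
      also have "\<dots> = Z $$ (offset (m1 n) i + a, offset (m1 n) i + c)"
      proof -
        have "Z $$ (offset (m1 n) i + a, offset (m1 n) i + c) =
            MG $$ (gmap n (offset (m1 n) i + a), gmap n (offset (m1 n) i + c))
          - MG $$ (offset n (bidx n (gmap n (offset (m1 n) i + a))), gmap n (offset (m1 n) i + c))"
          unfolding Z_def Zmat_def using K1 unfolding K_def by simp
        thus ?thesis unfolding ga gc ba by simp
      qed
      also have "\<dots> = B i $$ (a,c)" unfolding B_def using a c by simp
      finally show "Zmat 1 n' Mi $$ (a,c) = B i $$ (a,c)" .
    qed (use o1' in \<open>auto simp: Zmat_def B_def\<close>)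
    have detF1: "det (x \<cdot>\<^sub>m 1\<^sub>m 1 - F1) = x - lam1M r n d s i" for x
      by (subst det_single) (auto simp: F1_def)
    have e1: "[:- lam1M r n d s i, 1:] * char_poly (B i) = char_poly Mi"
    proof (rule poly_ext)
      fix x
      show "poly ([:- lam1M r n d s i, 1:] * char_poly (B i)) x = poly (char_poly Mi) x"
        unfolding poly_char_poly_det[OF Mic] poly_mult poly_char_poly_det[OF Bc] redi ZB detF1 by simp
    qed
    have l0: "\<alpha> - s * lam i 0 = lam1M r n d s i"
      unfolding \<alpha>_def lam1M_def assms(6)[OF i] by (simp add: algebra_simps)
    have up: "[0..<n i] = 0 # [1..<n i]" using n1[OF i] by (simp add: upt_conv_Cons)
    have "[:- lam1M r n d s i, 1:] * char_poly (B i) =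
        [:- lam1M r n d s i, 1:] * (\<Prod>a\<in>#mset (map (lam i) [1..<n i]). [:- (\<alpha> - s * a), 1:])"
    proof -
      have cM': "char_poly Mi = [:- (\<alpha> - s * lam i 0), 1:] * (\<Prod>a\<in>#mset (map (lam i) [1..<n i]). [:- (\<alpha> - s * a), 1:])"
        unfolding cpM up by (simp only: list.map mset.simps image_mset_add_mset prod_mset.add_mset)
      show ?thesis unfolding e1 cM' l0 ..
    qed
    hence cB: "char_poly (B i) = (\<Prod>a\<in>#mset (map (lam i) [1..<n i]). [:- (\<alpha> - s * a), 1:])"
      by (subst (asm) mult_left_cancel) auto
    have "mset (map (\<mu> i) [1..<n i]) = image_mset (\<lambda>a. \<alpha> - s * a) (mset (map (lam i) [1..<n i]))"
      unfolding \<mu>_def \<alpha>_def by (simp add: multiset.map_comp o_def algebra_simps)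
    thus ?thesis unfolding cB by (simp add: multiset.map_comp o_def)
  qed
  have cpMG: "char_poly MG = char_poly F * (\<Prod>i<r. char_poly (B i))"
  proof (rule poly_ext)
    fix x
    show "poly (char_poly MG) x = poly (char_poly F * (\<Prod>i<r. char_poly (B i))) x"
      unfolding poly_char_poly_det[OF MGc] poly_mult poly_prod poly_char_poly_det[OF Fc]
        poly_char_poly_det[OF Bc] red bd ..
  qed
  have Fsym: "F $$ (a,c) = F $$ (c,a)" if "a < r" "c < r" for a c
    using that unfolding F_def F_mat_def by (auto simp: mult.commute)
  have cpF: "char_poly F = (\<Prod>a\<in>#spec F. [:- a, 1:])" by (rule spec_char_poly[OF Fc Fsym])
  have "char_poly MG = (\<Prod>a\<in>#(\<Sum>i<r. mset (map (\<mu> i) [1..<n i])) + spec F. [:- a, 1:])"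
    unfolding cpMG cpF image_mset_union prod_mset.union prod_mset_image_sum using loc
    by (simp add: mult.commute)
  hence "spec MG = (\<Sum>i<r. mset (map (\<mu> i) [1..<n i])) + spec F" by (rule spec_eqI)
  thus ?thesis unfolding MG_def NN_def F_def \<mu>_def hjoin_order_def .
qed

end
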